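(* Let $(z,x)$ be a feasible solution of the cluster LP on a finite vertex set $V$, and define $y_{uv}=\sum_{S\supseteq\{u,v\}}z_S$ and $y_{uvw}=\sum_{S\supseteq\{u,v,w\}}z_S$ for all $u,v,w\in V$ (not necessarily distinct; so $y_{uu}=1$). Let $I_1,\dots,I_t$ be a partition of $[0,1]$ into intervals. Fix $u\in V$ and define $Q_u\in\mathbb R^{t\times t}$ by $$Q_u(I_j,I_k)=\sum_{v,w\in V:\ y_{uv}\in I_j,\ y_{uw}\in I_k}\big(y_{uvw}-y_{uv}y_{uw}\big).$$ Then $Q_u$ is positive semidefinite.
   Context: The cluster LP for a finite vertex set $V$ has a variable $z_S$ for every nonempty $S\subseteq V$ and $x_{uv}$ for every unordered pair $uv$ of distinct vertices, with constraints $\sum_{S\ni u}z_S=1$ for all $u\in V$, $\sum_{S\supseteq\{u,v\}}z_S=1-x_{uv}$ for all $uv$, and $z_S\ge0$. *)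

theory Defs
  imports "HOL-Analysis.Analysis"
begin

text \<open>Feasibility for the cluster LP on a finite vertex set V.
  z is indexed by subsets (only nonempty subsets of V matter), x by pairs of vertices
  (for an unordered pair uv we require x u v = x v u).\<close>
definition cluster_lp_feasible :: "'a set \<Rightarrow> ('a set \<Rightarrow> real) \<Rightarrow> ('a \<Rightarrow> 'a \<Rightarrow> real) \<Rightarrow> bool" where
  "cluster_lp_feasible V z x \<longleftrightarrow>
     (\<forall>S. S \<subseteq> V \<and> S \<noteq> {} \<longrightarrow> z S \<ge> 0) \<and>
     (\<forall>u\<in>V. (\<Sum>S\<in>{S. S \<subseteq> V \<and> S \<noteq> {} \<and> u \<in> S}. z S) = 1) \<and>
     (\<forall>u\<in>V. \<forall>v\<in>V. u \<noteq> v \<longrightarrow> x u v = x v u \<and>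
         (\<Sum>S\<in>{S. S \<subseteq> V \<and> S \<noteq> {} \<and> {u, v} \<subseteq> S}. z S) = 1 - x u v)"

definition y2 :: "'a set \<Rightarrow> ('a set \<Rightarrow> real) \<Rightarrow> 'a \<Rightarrow> 'a \<Rightarrow> real" where
  "y2 V z u v = (\<Sum>S\<in>{S. S \<subseteq> V \<and> S \<noteq> {} \<and> {u, v} \<subseteq> S}. z S)"

definition y3 :: "'a set \<Rightarrow> ('a set \<Rightarrow> real) \<Rightarrow> 'a \<Rightarrow> 'a \<Rightarrow> 'a \<Rightarrow> real" where
  "y3 V z u v w = (\<Sum>S\<in>{S. S \<subseteq> V \<and> S \<noteq> {} \<and> {u, v, w} \<subseteq> S}. z S)"

definition psd_mat :: "nat \<Rightarrow> (nat \<Rightarrow> nat \<Rightarrow> real) \<Rightarrow> bool" where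
  "psd_mat t Q \<longleftrightarrow> (\<forall>i<t. \<forall>j<t. Q i j = Q j i) \<and>
     (\<forall>c :: nat \<Rightarrow> real. (\<Sum>i<t. \<Sum>j<t. c i * Q i j * c j) \<ge> 0)"

definition interval_partition01 :: "nat \<Rightarrow> (nat \<Rightarrow> real set) \<Rightarrow> bool" where
  "interval_partition01 t I \<longleftrightarrow>
     (\<forall>j<t. is_interval (I j) \<and> I j \<noteq> {}) \<and>
     (\<forall>j<t. \<forall>k<t. j \<noteq> k \<longrightarrow> I j \<inter> I k = {}) \<and>
     (\<Union>j<t. I j) = {0..1}"

definition Qmat :: "'a set \<Rightarrow> ('a set \<Rightarrow> real) \<Rightarrow> (nat \<Rightarrow> real set) \<Rightarrow> 'a \<Rightarrow> nat \<Rightarrow> nat \<Rightarrow> real" where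
  "Qmat V z I u j k =
     (\<Sum>v\<in>{v\<in>V. y2 V z u v \<in> I j}. \<Sum>w\<in>{w\<in>V. y2 V z u w \<in> I k}.
        y3 V z u v w - y2 V z u v * y2 V z u w)"

end

theory Submission
  imports Defs
begin

lemma var_nonneg:
  fixes p X :: "'b \<Rightarrow> real"
  assumes "finite F" "\<And>S. S \<in> F \<Longrightarrow> p S \<ge> 0" "(\<Sum>S\<in>F. p S) = 1"
  shows "(\<Sum>S\<in>F. p S * X S * X S) - (\<Sum>S\<in>F. p S * X S) * (\<Sum>S\<in>F. p S * X S) \<ge> 0"
proof -
  define M where "M = (\<Sum>S\<in>F. p S * X S)"
  have "(\<Sum>S\<in>F. p S * (X S - M) * (X S - M)) =
        (\<Sum>S\<in>F. p S * X S * X S) - 2 * M * (\<Sum>S\<in>F. p S * X S) + M * M * (\<Sum>S\<in>F. p S)"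
    by (simp add: algebra_simps sum.distrib sum_subtractf sum_distrib_left sum_distrib_right)
  also have "\<dots> = (\<Sum>S\<in>F. p S * X S * X S) - M * M" using assms(3) M_def by simp
  finally have "(\<Sum>S\<in>F. p S * X S * X S) - M * M = (\<Sum>S\<in>F. p S * (X S - M) * (X S - M))" by simp
  also have "\<dots> \<ge> 0" by (rule sum_nonneg) (use assms(2) in \<open>metis mult.assoc mult_nonneg_nonneg zero_le_square\<close>)
  finally show ?thesis unfolding M_def .
qed

theorem lemma25:
  fixes V :: "'a set" and z :: "'a set \<Rightarrow> real" and x :: "'a \<Rightarrow> 'a \<Rightarrow> real"
    and I :: "nat \<Rightarrow> real set" and t :: nat and u :: 'a
  assumes "finite V"
    and "cluster_lp_feasible V z x"
    and "interval_partition01 t I"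
    and "u \<in> V"
  shows "psd_mat t (Qmat V z I u)"
proof -
  define F where "F = {S. S \<subseteq> V \<and> S \<noteq> {} \<and> u \<in> S}"
  have finF: "finite F" unfolding F_def using assms(1) by (simp add: finite_subset[of _ "Pow V"])
  have zpos: "\<And>S. S \<in> F \<Longrightarrow> z S \<ge> 0" using assms(2) unfolding cluster_lp_feasible_def F_def by auto
  have zsum: "(\<Sum>S\<in>F. z S) = 1" using assms(2,4) unfolding cluster_lp_feasible_def F_def by auto
  define e :: "'a \<Rightarrow> 'a set \<Rightarrow> real" where "e v S = (if v \<in> S then 1 else 0)" for v S
  have Y2: "y2 V z u v = (\<Sum>S\<in>F. z S * e v S)" for v
  proof -
    have "{S. S \<subseteq> V \<and> S \<noteq> {} \<and> {u, v} \<subseteq> S} = {S\<in>F. v \<in> S}" unfolding F_def by auto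
    thus ?thesis unfolding y2_def using finF apply (simp add: sum.inter_filter) by (rule sum.cong) (auto simp: e_def)
  qed
  have Y3: "y3 V z u v w = (\<Sum>S\<in>F. z S * e v S * e w S)" for v w
  proof -
    have "{S. S \<subseteq> V \<and> S \<noteq> {} \<and> {u, v, w} \<subseteq> S} = {S\<in>F. v \<in> S \<and> w \<in> S}" unfolding F_def by auto
    thus ?thesis unfolding y3_def using finF apply (simp add: sum.inter_filter) by (rule sum.cong) (auto simp: e_def)
  qed
  define h where "h v w = y3 V z u v w - y2 V z u v * y2 V z u w" for v w
  define ind where "ind i v = (if y2 V z u v \<in> I i then 1 else 0 :: real)" for i v
  have Qeq: "Qmat V z I u i j = (\<Sum>v\<in>V. \<Sum>w\<in>V. ind i v * ind j w * h v w)" for i j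
    apply (simp add: Qmat_def sum.inter_filter[OF assms(1)])
    apply (rule sum.cong, simp)
    by (auto simp: ind_def h_def intro!: sum.cong)
  have sym: "Qmat V z I u i j = Qmat V z I u j i" for i j
  proof -
    have "h v w = h w v" for v w unfolding h_def y3_def by (simp add: insert_commute)
    thus ?thesis unfolding Qeq by (subst sum.swap) (simp add: mult.commute mult.left_commute)
  qed
  show ?thesis unfolding psd_mat_def
  proof (intro conjI allI impI sym)
    fix c :: "nat \<Rightarrow> real"
    define g where "g v = (\<Sum>i<t. c i * ind i v)" for v
    define X where "X S = (\<Sum>v\<in>V. g v * e v S)" for S
    have "(\<Sum>i<t. \<Sum>j<t. c i * Qmat V z I u i j * c j) = (\<Sum>v\<in>V. \<Sum>w\<in>V. g v * g w * h v w)"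
    proof -
      define T where "T i j v w = c i * ind i v * (c j * ind j w) * h v w" for i j v w
      have "(\<Sum>i<t. \<Sum>j<t. c i * Qmat V z I u i j * c j) = (\<Sum>i<t. \<Sum>j<t. \<Sum>v\<in>V. \<Sum>w\<in>V. T i j v w)"
        unfolding Qeq T_def by (simp add: sum_distrib_left sum_distrib_right mult_ac)
      also have "\<dots> = (\<Sum>i<t. \<Sum>v\<in>V. \<Sum>j<t. \<Sum>w\<in>V. T i j v w)"
        by (rule sum.cong[OF refl], rule sum.swap)
      also have "\<dots> = (\<Sum>i<t. \<Sum>v\<in>V. \<Sum>w\<in>V. \<Sum>j<t. T i j v w)"
        by (rule sum.cong[OF refl], rule sum.cong[OF refl], rule sum.swap)
      also have "\<dots> = (\<Sum>v\<in>V. \<Sum>i<t. \<Sum>w\<in>V. \<Sum>j<t. T i j v w)"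
        by (rule sum.swap)
      also have "\<dots> = (\<Sum>v\<in>V. \<Sum>w\<in>V. \<Sum>i<t. \<Sum>j<t. T i j v w)"
        by (rule sum.cong[OF refl], rule sum.swap)
      also have "\<dots> = (\<Sum>v\<in>V. \<Sum>w\<in>V. g v * g w * h v w)"
        unfolding g_def T_def sum_product by (simp add: sum_distrib_right)
      finally show ?thesis .
    qed
    also have "\<dots> = (\<Sum>S\<in>F. z S * X S * X S) - (\<Sum>S\<in>F. z S * X S) * (\<Sum>S\<in>F. z S * X S)"
    proof -
      have A: "(\<Sum>v\<in>V. \<Sum>w\<in>V. g v * g w * y3 V z u v w) = (\<Sum>S\<in>F. z S * X S * X S)"
      proof -
        have "(\<Sum>S\<in>F. z S * X S * X S) = (\<Sum>S\<in>F. \<Sum>v\<in>V. \<Sum>w\<in>V. g v * g w * (z S * e v S * e w S))"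
          unfolding X_def by (rule sum.cong[OF refl]) (simp add: sum_product sum_distrib_left mult_ac)
        also have "\<dots> = (\<Sum>v\<in>V. \<Sum>S\<in>F. \<Sum>w\<in>V. g v * g w * (z S * e v S * e w S))"
          by (rule sum.swap)
        also have "\<dots> = (\<Sum>v\<in>V. \<Sum>w\<in>V. \<Sum>S\<in>F. g v * g w * (z S * e v S * e w S))"
          by (rule sum.cong[OF refl], rule sum.swap)
        also have "\<dots> = (\<Sum>v\<in>V. \<Sum>w\<in>V. g v * g w * y3 V z u v w)"
          unfolding Y3 by (simp add: sum_distrib_left)
        finally show ?thesis by simp
      qed
      have B1: "(\<Sum>v\<in>V. g v * y2 V z u v) = (\<Sum>S\<in>F. z S * X S)"
      proof -
        have "(\<Sum>v\<in>V. g v * y2 V z u v) = (\<Sum>v\<in>V. \<Sum>S\<in>F. z S * (g v * e v S))"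
          unfolding Y2 by (simp add: sum_distrib_left mult_ac)
        also have "\<dots> = (\<Sum>S\<in>F. \<Sum>v\<in>V. z S * (g v * e v S))" by (rule sum.swap)
        also have "\<dots> = (\<Sum>S\<in>F. z S * X S)" unfolding X_def by (simp add: sum_distrib_left)
        finally show ?thesis .
      qed
      have B: "(\<Sum>v\<in>V. \<Sum>w\<in>V. g v * g w * (y2 V z u v * y2 V z u w))
          = (\<Sum>S\<in>F. z S * X S) * (\<Sum>S\<in>F. z S * X S)"
        unfolding B1[symmetric] sum_product by (simp add: mult_ac)
      show ?thesis unfolding h_def A[symmetric] B[symmetric]
        by (simp add: right_diff_distrib sum_subtractf)
    qed
    also have "\<dots> \<ge> 0" by (rule var_nonneg[OF finF zpos zsum])
    finally show "(\<Sum>i<t. \<Sum>j<t. c i * Qmat V z I u i j * c j) \<ge> 0" .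
  qed
qed

end
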